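(* Let $k:\mathbb{R}^d\to[0,\infty)$ be radial with $\int_{\mathbb{R}^d}k=1$, $|x|^2k\in L^1(\mathbb{R}^d)$ and $\nabla k\in L^1(\mathbb{R}^d)$, and let $\hat k(\xi)=\int_{\mathbb{R}^d}k(x)e^{-2\pi i x\cdot\xi}\mathrm{d} x$. Define $h:\mathbb{R}^d\to\mathbb{R}^d$ by $h(\xi)=\xi\sqrt{\frac{\hat k(0)-\hat k(\xi)}{|\xi|^2}}$ for $\xi\ne0$ and $h(0)=0$. Then $h$ is globally Lipschitz on $\mathbb{R}^d$.
   Context: Under these assumptions $\hat k$ is real and $\hat k(0)-\hat k(\xi)\ge0$ for all $\xi$, so $h$ is well defined. *)

theory Defs
  imports "HOL-Analysis.Analysis"
begin

definition fourier :: "('a::euclidean_space \<Rightarrow> real) \<Rightarrow> 'a \<Rightarrow> complex" where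
  "fourier k \<xi> = (LINT x|lborel. complex_of_real (k x) * cis (- 2 * pi * (x \<bullet> \<xi>)))"

definition test_fun :: "('a::euclidean_space \<Rightarrow> real) \<Rightarrow> ('a \<Rightarrow> 'a \<Rightarrow> real) \<Rightarrow> bool" where
  "test_fun \<phi> D \<longleftrightarrow> (\<forall>x. (\<phi> has_derivative D x) (at x))
      \<and> (\<forall>b\<in>Basis. continuous_on UNIV (\<lambda>x. D x b))
      \<and> compact (closure {x. \<phi> x \<noteq> 0})"

definition weak_gradient :: "('a::euclidean_space \<Rightarrow> real) \<Rightarrow> ('a \<Rightarrow> 'a) \<Rightarrow> bool" where
  "weak_gradient k g \<longleftrightarrow> (\<forall>\<phi> D. test_fun \<phi> D \<longrightarrow>
     (\<forall>b\<in>Basis. (LINT x|lborel. k x * D x b) = - (LINT x|lborel. (g x \<bullet> b) * \<phi> x)))"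

definition hfun :: "('a::euclidean_space \<Rightarrow> real) \<Rightarrow> 'a \<Rightarrow> 'a" where
  "hfun k \<xi> = (if \<xi> = 0 then 0
     else sqrt ((Re (fourier k 0) - Re (fourier k \<xi>)) / (norm \<xi>)\<^sup>2) *\<^sub>R \<xi>)"

end

theory Submission
  imports Defs
begin

lemma intg_kb:
  fixes k :: "'a::euclidean_space \<Rightarrow> real"
  assumes "integrable lborel k" "\<And>x. k x \<ge> 0" "b \<in> borel_measurable borel" "\<And>x. \<bar>b x\<bar> \<le> B"
  shows "integrable lborel (\<lambda>x. k x * b x)"
proof (rule Bochner_Integration.integrable_bound[where f="\<lambda>x. B * k x" and g="\<lambda>x. k x * b x"])
  show "integrable lborel (\<lambda>x. B * k x)" using assms(1) by simp
  show "(\<lambda>x. k x * b x) \<in> borel_measurable lborel"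
    using assms(1,3) by (simp add: borel_measurable_integrable)
  show "AE x in lborel. norm (k x * b x) \<le> norm (B * k x)"
  proof (rule AE_I2)
    fix x
    have "\<bar>k x * b x\<bar> = k x * \<bar>b x\<bar>" using assms(2)[of x] by (simp add: abs_mult)
    also have "\<dots> \<le> k x * B" using assms(2)[of x] assms(4)[of x] by (simp add: mult_left_mono)
    finally show "norm (k x * b x) \<le> norm (B * k x)" by (simp add: mult.commute)
  qed
qed

lemma re_fourier:
  fixes k :: "'a::euclidean_space \<Rightarrow> real"
  assumes "integrable lborel k" "\<And>x. k x \<ge> 0"
  shows "Re (fourier k \<xi>) = (LINT x|lborel. k x * cos (2 * pi * (x \<bullet> \<xi>)))"
proof -
  have c: "(\<lambda>x. cis (- 2 * pi * (x \<bullet> \<xi>))) \<in> borel_measurable borel"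
    by (intro borel_measurable_continuous_onI continuous_intros)
  have kk: "k \<in> borel_measurable borel" using assms(1) by (simp add: borel_measurable_integrable)
  have m: "(\<lambda>x. complex_of_real (k x) * cis (- 2 * pi * (x \<bullet> \<xi>))) \<in> borel_measurable lborel"
    using kk c by simp
  have "integrable lborel (\<lambda>x. complex_of_real (k x) * cis (- 2 * pi * (x \<bullet> \<xi>)))"
    by (rule Bochner_Integration.integrable_bound[OF assms(1) m]) (auto simp: norm_mult assms(2))
  then show ?thesis unfolding fourier_def
    by (subst integral_Re[symmetric]) auto
qed

lemma sin_lip: "\<bar>sin w - sin z\<bar> \<le> \<bar>w - z\<bar>" for w z :: real
proof -
  have "\<bar>sin w - sin z\<bar> = 2 * \<bar>sin ((w - z) / 2)\<bar> * \<bar>cos ((w + z) / 2)\<bar>"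
    by (simp add: sin_diff_sin abs_mult)
  also have "\<dots> \<le> 2 * \<bar>(w - z) / 2\<bar> * 1"
    by (intro mult_mono abs_sin_x_le_abs_x abs_cos_le_one) auto
  finally show ?thesis by simp
qed

lemma quad_disc:
  fixes A B C :: real
  assumes "\<And>t. 0 \<le> A + 2 * t * C + t\<^sup>2 * B" "B \<ge> 0"
  shows "C \<le> sqrt A * sqrt B"
proof (cases "B = 0")
  case True
  have "C = 0"
  proof (rule ccontr)
    assume "C \<noteq> 0"
    have "0 \<le> A + 2 * (- (\<bar>A\<bar> + 1) / (2 * C)) * C" using assms(1)[of "- (\<bar>A\<bar> + 1) / (2 * C)"] True by simp
    also have "\<dots> = A - (\<bar>A\<bar> + 1)" using \<open>C \<noteq> 0\<close> by (simp add: field_simps)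
    finally show False by linarith
  qed
  moreover have "A \<ge> 0" using assms(1)[of 0] by simp
  ultimately show ?thesis using assms(2) by simp
next
  case False
  then have Bp: "B > 0" using assms(2) by simp
  have "0 \<le> A + 2 * (- C / B) * C + (- C / B)\<^sup>2 * B" using assms(1) .
  also have "\<dots> = A - C\<^sup>2 / B" using Bp by (simp add: field_simps power2_eq_square)
  finally have "C\<^sup>2 \<le> A * B" using Bp by (simp add: field_simps)
  then have "sqrt (C\<^sup>2) \<le> sqrt (A * B)" by (rule real_sqrt_le_mono)
  then show ?thesis by (simp add: real_sqrt_mult)
qed

lemma weighted_CS:
  fixes k :: "'a::euclidean_space \<Rightarrow> real"
  assumes "\<And>x. k x \<ge> 0"
    and i1: "integrable lborel (\<lambda>x. k x * (f x)\<^sup>2)"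
    and i2: "integrable lborel (\<lambda>x. k x * (g x)\<^sup>2)"
    and i3: "integrable lborel (\<lambda>x. k x * (f x * g x))"
  shows "(LINT x|lborel. k x * (f x * g x)) \<le>
     sqrt (LINT x|lborel. k x * (f x)\<^sup>2) * sqrt (LINT x|lborel. k x * (g x)\<^sup>2)"
proof (rule quad_disc)
  fix t :: real
  have eq: "(\<lambda>x. k x * (f x + t * g x)\<^sup>2) =
     (\<lambda>x. k x * (f x)\<^sup>2 + (2 * t) * (k x * (f x * g x)) + t\<^sup>2 * (k x * (g x)\<^sup>2))"
    by (auto simp: fun_eq_iff power2_eq_square algebra_simps)
  have "0 \<le> (LINT x|lborel. k x * (f x + t * g x)\<^sup>2)"
    by (rule integral_nonneg_AE) (auto intro: AE_I2 simp: assms(1))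
  also have "\<dots> = (LINT x|lborel. k x * (f x)\<^sup>2) + 2 * t * (LINT x|lborel. k x * (f x * g x))
      + t\<^sup>2 * (LINT x|lborel. k x * (g x)\<^sup>2)"
    unfolding eq using i1 i2 i3 by simp
  finally show "0 \<le> (LINT x|lborel. k x * (f x)\<^sup>2) + 2 * t * (LINT x|lborel. k x * (f x * g x))
      + t\<^sup>2 * (LINT x|lborel. k x * (g x)\<^sup>2)" .
next
  show "0 \<le> (LINT x|lborel. k x * (g x)\<^sup>2)"
    by (rule integral_nonneg_AE) (auto intro: AE_I2 simp: assms(1))
qed

lemma sinb1: "(sin u - sin v)\<^sup>2 \<le> (4::real)"
proof -
  have "\<bar>sin u - sin v\<bar> \<le> 2" using abs_sin_le_one[of u] abs_sin_le_one[of v] by linarith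
  then have "\<bar>sin u - sin v\<bar>\<^sup>2 \<le> 2\<^sup>2" by (rule power_mono) simp
  then show ?thesis by simp
qed

lemma sinb2: "\<bar>sin v * (sin u - sin v)\<bar> \<le> (2::real)"
proof -
  have "\<bar>sin u - sin v\<bar> \<le> 2" using abs_sin_le_one[of u] abs_sin_le_one[of v] by linarith
  then have "\<bar>sin v\<bar> * \<bar>sin u - sin v\<bar> \<le> 1 * 2"
    by (intro mult_mono) (auto simp: abs_sin_le_one)
  then show ?thesis by (simp add: abs_mult)
qed

definition PP :: "('a::euclidean_space \<Rightarrow> real) \<Rightarrow> 'a \<Rightarrow> real" where
  "PP k \<xi> = (LINT x|lborel. k x * (sin (pi * (x \<bullet> \<xi>)))\<^sup>2)"

lemma meas_sin: "(\<lambda>x::'a::euclidean_space. sin (pi * (x \<bullet> \<xi>))) \<in> borel_measurable borel"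
  by (intro borel_measurable_continuous_onI continuous_intros)

lemma meas_cos: "(\<lambda>x::'a::euclidean_space. cos (c * (x \<bullet> \<xi>))) \<in> borel_measurable borel"
  by (intro borel_measurable_continuous_onI continuous_intros)

lemma diffP:
  fixes k :: "'a::euclidean_space \<Rightarrow> real"
  assumes "integrable lborel k" "\<And>x. k x \<ge> 0"
  shows "Re (fourier k 0) - Re (fourier k \<xi>) = 2 * PP k \<xi>"
proof -
  have i1: "integrable lborel (\<lambda>x. k x * cos ((2 * pi) * (x \<bullet> \<xi>)))"
    by (rule intg_kb[OF assms meas_cos, where B=1]) simp
  have i0: "integrable lborel (\<lambda>x. k x * cos ((2 * pi) * (x \<bullet> 0)))"
    by (rule intg_kb[OF assms meas_cos, where B=1]) simp
  have "Re (fourier k 0) - Re (fourier k \<xi>) =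
      (LINT x|lborel. k x * cos ((2 * pi) * (x \<bullet> 0)) - k x * cos ((2 * pi) * (x \<bullet> \<xi>)))"
    using i0 i1 by (simp add: re_fourier[OF assms] mult.assoc)
  also have "\<dots> = (LINT x|lborel. 2 * (k x * (sin (pi * (x \<bullet> \<xi>)))\<^sup>2))"
  proof (rule Bochner_Integration.integral_cong[OF refl])
    fix x
    have "cos ((2 * pi) * (x \<bullet> \<xi>)) = cos (2 * (pi * (x \<bullet> \<xi>)))" by (simp add: mult.assoc)
    also have "\<dots> = 1 - 2 * (sin (pi * (x \<bullet> \<xi>)))\<^sup>2" by (rule cos_double_sin)
    finally have e: "cos ((2 * pi) * (x \<bullet> \<xi>)) = 1 - 2 * (sin (pi * (x \<bullet> \<xi>)))\<^sup>2" .
    show "k x * cos ((2 * pi) * (x \<bullet> 0)) - k x * cos ((2 * pi) * (x \<bullet> \<xi>)) =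
        2 * (k x * (sin (pi * (x \<bullet> \<xi>)))\<^sup>2)" unfolding e by (simp add: algebra_simps)
  qed
  also have "\<dots> = 2 * PP k \<xi>" unfolding PP_def by simp
  finally show ?thesis .
qed

lemma PP_nonneg: "(\<And>x. k x \<ge> 0) \<Longrightarrow> PP k \<xi> \<ge> 0"
  unfolding PP_def by (rule integral_nonneg_AE) (auto intro: AE_I2)

lemma PP_step:
  fixes k :: "'a::euclidean_space \<Rightarrow> real"
  assumes int_k: "integrable lborel k" and nn: "\<And>x. k x \<ge> 0"
    and moment: "integrable lborel (\<lambda>x. (norm x)\<^sup>2 * k x)"
  shows "sqrt (PP k \<xi>) \<le> sqrt (PP k \<eta>) + pi * sqrt (LINT x|lborel. (norm x)\<^sup>2 * k x) * norm (\<xi> - \<eta>)"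
proof -
  define m where "m = (LINT x|lborel. (norm x)\<^sup>2 * k x)"
  define a where "a = (\<lambda>x::'a. sin (pi * (x \<bullet> \<xi>)))"
  define b where "b = (\<lambda>x::'a. sin (pi * (x \<bullet> \<eta>)))"
  define c where "c = (\<lambda>x. a x - b x)"
  define \<delta> where "\<delta> = norm (\<xi> - \<eta>)"
  have ma: "a \<in> borel_measurable borel" unfolding a_def by (rule meas_sin)
  have mb: "b \<in> borel_measurable borel" unfolding b_def by (rule meas_sin)
  have ia: "integrable lborel (\<lambda>x. k x * (a x)\<^sup>2)"
    by (rule intg_kb[OF int_k nn, where B=1]) (use ma in simp, simp add: a_def abs_square_le_1)
  have ib: "integrable lborel (\<lambda>x. k x * (b x)\<^sup>2)"
    by (rule intg_kb[OF int_k nn, where B=1]) (use mb in simp, simp add: b_def abs_square_le_1)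
  have ic: "integrable lborel (\<lambda>x. k x * (c x)\<^sup>2)"
    by (rule intg_kb[OF int_k nn, where B=4]) (use ma mb in \<open>simp add: c_def\<close>, simp add: c_def a_def b_def sinb1)
  have ibc: "integrable lborel (\<lambda>x. k x * (b x * c x))"
    by (rule intg_kb[OF int_k nn, where B=2]) (use ma mb in \<open>simp add: c_def\<close>, simp add: c_def a_def b_def sinb2)
  have CS: "(LINT x|lborel. k x * (b x * c x)) \<le> sqrt (PP k \<eta>) * sqrt (LINT x|lborel. k x * (c x)\<^sup>2)"
    using weighted_CS[OF nn ib ic ibc] unfolding PP_def b_def by simp
  have Eb: "(LINT x|lborel. k x * (c x)\<^sup>2) \<le> (LINT x|lborel. (pi\<^sup>2 * \<delta>\<^sup>2) * ((norm x)\<^sup>2 * k x))"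
  proof (rule integral_mono[OF ic])
    show "integrable lborel (\<lambda>x. (pi\<^sup>2 * \<delta>\<^sup>2) * ((norm x)\<^sup>2 * k x))" using moment by simp
    fix x :: 'a
    have "\<bar>c x\<bar> \<le> \<bar>pi * (x \<bullet> \<xi>) - pi * (x \<bullet> \<eta>)\<bar>" unfolding c_def a_def b_def by (rule sin_lip)
    also have "\<dots> = pi * \<bar>x \<bullet> (\<xi> - \<eta>)\<bar>" by (simp add: inner_diff_right right_diff_distrib[symmetric] abs_mult)
    also have "\<dots> \<le> pi * (norm x * \<delta>)" unfolding \<delta>_def
      by (intro mult_left_mono Cauchy_Schwarz_ineq2) auto
    finally have "\<bar>c x\<bar> \<le> pi * (norm x * \<delta>)" .
    then have "(c x)\<^sup>2 \<le> (pi * (norm x * \<delta>))\<^sup>2"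
      by (metis abs_ge_zero order_trans power2_abs power_mono)
    then have "k x * (c x)\<^sup>2 \<le> k x * (pi * (norm x * \<delta>))\<^sup>2" by (rule mult_left_mono) (rule nn)
    then show "k x * (c x)\<^sup>2 \<le> (pi\<^sup>2 * \<delta>\<^sup>2) * ((norm x)\<^sup>2 * k x)"
      by (simp add: power_mult_distrib algebra_simps)
  qed
  then have Eb': "(LINT x|lborel. k x * (c x)\<^sup>2) \<le> pi\<^sup>2 * \<delta>\<^sup>2 * m" unfolding m_def by simp
  have m0: "m \<ge> 0" unfolding m_def by (rule integral_nonneg_AE) (auto intro: AE_I2 simp: nn)
  define E where "E = (LINT x|lborel. k x * (c x)\<^sup>2)"
  have E0: "E \<ge> 0" unfolding E_def by (rule integral_nonneg_AE) (auto intro: AE_I2 simp: nn)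
  have "PP k \<xi> = (LINT x|lborel. k x * (b x)\<^sup>2 + 2 * (k x * (b x * c x)) + k x * (c x)\<^sup>2)"
    unfolding PP_def
    by (rule Bochner_Integration.integral_cong[OF refl]) (simp add: a_def c_def power2_eq_square algebra_simps)
  also have "\<dots> = PP k \<eta> + 2 * (LINT x|lborel. k x * (b x * c x)) + E"
    using ib ibc ic unfolding PP_def E_def b_def by simp
  also have "\<dots> \<le> PP k \<eta> + 2 * (sqrt (PP k \<eta>) * sqrt E) + E"
    using CS unfolding E_def by simp
  also have "\<dots> = (sqrt (PP k \<eta>) + sqrt E)\<^sup>2"
    using PP_nonneg[of k \<eta>, OF nn] E0 by (simp add: power2_eq_square algebra_simps)
  finally have "sqrt (PP k \<xi>) \<le> sqrt ((sqrt (PP k \<eta>) + sqrt E)\<^sup>2)" by (rule real_sqrt_le_mono)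
  then have "sqrt (PP k \<xi>) \<le> sqrt (PP k \<eta>) + sqrt E"
    using E0 PP_nonneg[of k \<eta>, OF nn] by simp
  also have "sqrt E \<le> sqrt (pi\<^sup>2 * \<delta>\<^sup>2 * m)" using Eb' unfolding E_def by (rule real_sqrt_le_mono)
  also have "sqrt (pi\<^sup>2 * \<delta>\<^sup>2 * m) = pi * sqrt m * \<delta>"
    by (simp add: real_sqrt_mult \<delta>_def)
  finally show ?thesis unfolding m_def \<delta>_def by simp
qed

lemma unit_diff:
  fixes \<xi> \<eta> :: "'a::real_normed_vector"
  assumes "\<xi> \<noteq> 0" "\<eta> \<noteq> 0"
  shows "norm (\<xi> /\<^sub>R norm \<xi> - \<eta> /\<^sub>R norm \<eta>) \<le> 2 * norm (\<xi> - \<eta>) / norm \<xi>"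
proof -
  have n: "norm \<xi> > 0" "norm \<eta> > 0" using assms by auto
  have s: "inverse (norm \<xi>) - (norm \<eta> - norm \<xi>) / (norm \<xi> * norm \<eta>) = inverse (norm \<eta>)"
    using n by (simp add: field_simps)
  have "(\<xi> - \<eta>) /\<^sub>R norm \<xi> + ((norm \<eta> - norm \<xi>) / (norm \<xi> * norm \<eta>)) *\<^sub>R \<eta>
     = \<xi> /\<^sub>R norm \<xi> - (inverse (norm \<xi>) - (norm \<eta> - norm \<xi>) / (norm \<xi> * norm \<eta>)) *\<^sub>R \<eta>"
    by (simp add: scaleR_diff_right scaleR_diff_left)
  also have "\<dots> = \<xi> /\<^sub>R norm \<xi> - \<eta> /\<^sub>R norm \<eta>" unfolding s by simp
  finally have "\<xi> /\<^sub>R norm \<xi> - \<eta> /\<^sub>R norm \<eta> = (\<xi> - \<eta>) /\<^sub>R norm \<xi> + ((norm \<eta> - norm \<xi>) / (norm \<xi> * norm \<eta>)) *\<^sub>R \<eta>" by simp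
  then have "norm (\<xi> /\<^sub>R norm \<xi> - \<eta> /\<^sub>R norm \<eta>) \<le> norm ((\<xi> - \<eta>) /\<^sub>R norm \<xi>) + norm (((norm \<eta> - norm \<xi>) / (norm \<xi> * norm \<eta>)) *\<^sub>R \<eta>)"
    by (simp only: norm_triangle_ineq)
  also have "norm ((\<xi> - \<eta>) /\<^sub>R norm \<xi>) = norm (\<xi> - \<eta>) / norm \<xi>"
    using n by (simp add: divide_inverse mult.commute)
  also have "norm (((norm \<eta> - norm \<xi>) / (norm \<xi> * norm \<eta>)) *\<^sub>R \<eta>) = \<bar>norm \<eta> - norm \<xi>\<bar> / (norm \<xi> * norm \<eta>) * norm \<eta>"
    using n by (simp add: abs_divide abs_mult)
  also have "\<bar>norm \<eta> - norm \<xi>\<bar> / (norm \<xi> * norm \<eta>) * norm \<eta> = \<bar>norm \<eta> - norm \<xi>\<bar> / norm \<xi>"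
    using n by simp
  also have "\<bar>norm \<eta> - norm \<xi>\<bar> \<le> norm (\<xi> - \<eta>)"
    by (metis norm_minus_commute norm_triangle_ineq3)
  then have "\<bar>norm \<eta> - norm \<xi>\<bar> / norm \<xi> \<le> norm (\<xi> - \<eta>) / norm \<xi>"
    using n by (simp add: divide_right_mono)
  finally show ?thesis by simp
qed

theorem lemma3p1:
  fixes k :: "'a::euclidean_space \<Rightarrow> real"
  assumes nonneg: "\<And>x. k x \<ge> 0"
    and radial: "\<And>x y. norm x = norm y \<Longrightarrow> k x = k y"
    and int_k: "integrable lborel k"
    and mass: "(LINT x|lborel. k x) = 1"
    and moment: "integrable lborel (\<lambda>x. (norm x)\<^sup>2 * k x)"
    and grad: "\<exists>g. integrable lborel g \<and> weak_gradient k g"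
  shows "\<exists>C. C-lipschitz_on UNIV (hfun k)"
proof -
  define m where "m = (LINT x|lborel. (norm x)\<^sup>2 * k x)"
  define L where "L = sqrt 2 * pi * sqrt m"
  define G where "G = (\<lambda>\<xi>. sqrt (2 * PP k \<xi>))"
  have m0: "m \<ge> 0" unfolding m_def by (rule integral_nonneg_AE) (auto intro: AE_I2 simp: nonneg)
  have L0: "L \<ge> 0" unfolding L_def using m0 by simp
  have G0: "G \<xi> \<ge> 0" for \<xi> unfolding G_def using PP_nonneg[of k \<xi>, OF nonneg] by simp
  have hG: "hfun k \<xi> = (G \<xi> / norm \<xi>) *\<^sub>R \<xi>" if "\<xi> \<noteq> 0" for \<xi>
    using that unfolding hfun_def G_def diffP[OF int_k nonneg] by (simp add: real_sqrt_divide)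
  have h0: "hfun k 0 = 0" unfolding hfun_def by simp
  have step: "G \<xi> \<le> G \<eta> + L * norm (\<xi> - \<eta>)" for \<xi> \<eta>
  proof -
    have "sqrt 2 * sqrt (PP k \<xi>) \<le> sqrt 2 * (sqrt (PP k \<eta>) + pi * sqrt m * norm (\<xi> - \<eta>))"
      using PP_step[OF int_k nonneg moment, of \<xi> \<eta>] unfolding m_def by (intro mult_left_mono) auto
    then show ?thesis unfolding G_def L_def by (simp add: real_sqrt_mult algebra_simps)
  qed
  have Gd: "\<bar>G \<xi> - G \<eta>\<bar> \<le> L * norm (\<xi> - \<eta>)" for \<xi> \<eta>
    using step[of \<xi> \<eta>] step[of \<eta> \<xi>] by (simp add: norm_minus_commute)
  have PP0: "PP k 0 = 0" unfolding PP_def by simp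
  have Gb: "G \<xi> \<le> L * norm \<xi>" for \<xi>
    using step[of \<xi> 0] PP0 unfolding G_def by simp
  show ?thesis
  proof (intro exI lipschitz_onI)
    show "0 \<le> 3 * L" using L0 by simp
    fix \<xi> \<eta> :: 'a
    show "dist (hfun k \<xi>) (hfun k \<eta>) \<le> 3 * L * dist \<xi> \<eta>"
    proof (cases "\<xi> = 0 \<or> \<eta> = 0")
      case True
      then show ?thesis
      proof
        assume z: "\<xi> = 0"
        show ?thesis
        proof (cases "\<eta> = 0")
          case True then show ?thesis using z h0 by simp
        next
          case False
          then have "dist (hfun k \<xi>) (hfun k \<eta>) = G \<eta>" using z h0 hG[OF False] G0[of \<eta>] by (simp add: dist_norm)
          also have "\<dots> \<le> L * norm \<eta>" by (rule Gb)
          also have "\<dots> \<le> 3 * L * dist \<xi> \<eta>" using z L0 by (simp add: dist_norm mult_right_mono)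
          finally show ?thesis .
        qed
      next
        assume z: "\<eta> = 0"
        show ?thesis
        proof (cases "\<xi> = 0")
          case True then show ?thesis using z h0 by simp
        next
          case False
          then have "dist (hfun k \<xi>) (hfun k \<eta>) = G \<xi>" using z h0 hG[OF False] G0[of \<xi>] by (simp add: dist_norm)
          also have "\<dots> \<le> L * norm \<xi>" by (rule Gb)
          also have "\<dots> \<le> 3 * L * dist \<xi> \<eta>" using z L0 by (simp add: dist_norm mult_right_mono)
          finally show ?thesis .
        qed
      qed
    next
      case False
      then have nz: "\<xi> \<noteq> 0" "\<eta> \<noteq> 0" by auto
      have np: "norm \<xi> > 0" "norm \<eta> > 0" using nz by auto
      define u where "u = (\<lambda>v::'a. v /\<^sub>R norm v)"
      have hu: "hfun k v = G v *\<^sub>R u v" if "v \<noteq> 0" for v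
        using hG[OF that] unfolding u_def by (simp add: divide_inverse)
      have nu: "norm (u \<eta>) = 1" using nz unfolding u_def by simp
      have "hfun k \<xi> - hfun k \<eta> = G \<xi> *\<^sub>R (u \<xi> - u \<eta>) + (G \<xi> - G \<eta>) *\<^sub>R u \<eta>"
        using hu[OF nz(1)] hu[OF nz(2)] by (simp add: algebra_simps)
      then have "dist (hfun k \<xi>) (hfun k \<eta>) \<le> G \<xi> * norm (u \<xi> - u \<eta>) + \<bar>G \<xi> - G \<eta>\<bar>"
        using G0[of \<xi>] nu by (metis dist_norm norm_scaleR norm_triangle_ineq abs_of_nonneg mult.right_neutral)
      also have "G \<xi> * norm (u \<xi> - u \<eta>) \<le> (L * norm \<xi>) * (2 * norm (\<xi> - \<eta>) / norm \<xi>)"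
        using unit_diff[OF nz] Gb[of \<xi>] G0[of \<xi>] unfolding u_def
        by (intro mult_mono) auto
      also have "(L * norm \<xi>) * (2 * norm (\<xi> - \<eta>) / norm \<xi>) = 2 * L * norm (\<xi> - \<eta>)"
        using np by simp
      also have "\<bar>G \<xi> - G \<eta>\<bar> \<le> L * norm (\<xi> - \<eta>)" by (rule Gd)
      finally show ?thesis by (simp add: dist_norm)
    qed
  qed
qed

end
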